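(* Let $a, c \in \mathbb{N}$ and $b, d \in \mathbb{Z}$. (i) Suppose $a\neq c$. Then $\chi(G_{a,b,c,d}) \le \left\lceil \frac{\log \alpha\beta}{\log\alpha}\right\rceil$ for any real numbers $1<\alpha<\beta$ satisfying $R_{a,b,c,d}\subseteq (\beta^{-1},\alpha^{-1})\cup(\alpha,\beta)$. (ii) Suppose $a=c$. If there exists a prime $p$ with $v_p(a)>\max\{v_p(b),v_p(d)\}$ and $v_p(b)=v_p(d)$, then $\chi(G_{a,b,c,d})\le p^{v_p(b-d)}(p-1)$. (iii) Suppose $a=c$. If there exists a prime $p$ with $v_p(a)>\max\{v_p(b),v_p(d)\}$ and $v_p(b)\neq v_p(d)$, then $\chi(G_{a,b,c,d})=2$.
   Context: $\mathbb{N}=\{1,2,\dots\}$. For $a,c\in\mathbb{N}$, $b,d\in\mathbb{Z}$, $R_{a,b,c,d} := \left\{ \frac{an+b}{cn+d} : n \in \mathbb{N} \right\} \cap (\mathbb{Q}_{>0}\setminus\{1\})$. For non-empty $R\subseteq\mathbb{Q}_{>0}\setminus\{1\}$, $G(R)$ is the graph with vertex set $\mathbb{N}$ and edge set $\{\{m,n\}: m/n\in R\}$; $G_{a,b,c,d}:=G(R_{a,b,c,d})$. $\chi$ denotes chromatic number, $v_p$ the $p$-adic valuation (with $v_p(0)=\infty$). *)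

theory Defs
  imports "HOL-Analysis.Analysis" "HOL-Computational_Algebra.Computational_Algebra" "HOL-Library.Extended_Nat"
begin

text \<open>The set R_{a,b,c,d} (as a set of rationals); vertices are the positive naturals.
  If c n + d = 0 the quotient is 0 in Isabelle and is thus excluded by the intersection.\<close>
definition Rset :: "nat \<Rightarrow> int \<Rightarrow> nat \<Rightarrow> int \<Rightarrow> rat set" where
  "Rset a b c d =
     {of_int (int a * int n + b) / of_int (int c * int n + d) | n. n \<ge> 1}
     \<inter> {q. q > 0 \<and> q \<noteq> 1}"

definition adjG :: "rat set \<Rightarrow> nat \<Rightarrow> nat \<Rightarrow> bool" where
  "adjG R m n \<longleftrightarrow> m \<ge> 1 \<and> n \<ge> 1 \<and> (of_nat m / of_nat n \<in> R \<or> of_nat n / of_nat m \<in> R)"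

definition colorable :: "rat set \<Rightarrow> nat \<Rightarrow> bool" where
  "colorable R k \<longleftrightarrow> (\<exists>f :: nat \<Rightarrow> nat. (\<forall>n\<ge>1. f n < k) \<and>
      (\<forall>m n. adjG R m n \<longrightarrow> f m \<noteq> f n))"

text \<open>Chromatic number, infinite if no finite colouring exists.\<close>
definition chi :: "rat set \<Rightarrow> enat" where
  "chi R = Inf {enat k | k. colorable R k}"

definition vp :: "nat \<Rightarrow> int \<Rightarrow> enat" where
  "vp p x = (if x = 0 then \<infinity> else enat (multiplicity (int p) x))"

end

theory Submission
  imports Defs
begin


lemma chi_le: "colorable R k \<Longrightarrow> chi R \<le> enat k"
  unfolding chi_def by (auto intro: Inf_lower)

lemma mod_diff_ne:
  fixes X Y :: int and k :: nat
  assumes "0 \<le> Y" "1 \<le> X - Y" "X - Y < int k"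
  shows "nat X mod k \<noteq> nat Y mod k"
proof
  assume h: "nat X mod k = nat Y mod k"
  have "nat X = nat Y + nat (X - Y)" using assms by auto
  with h have "(nat Y + nat (X - Y)) mod k = nat Y mod k" by simp
  hence "k dvd (nat Y + nat (X - Y)) - nat Y"
    by (subst mod_eq_dvd_iff_nat[symmetric]) auto
  hence "k dvd nat (X - Y)" by simp
  moreover have "0 < nat (X - Y)" "nat (X - Y) < k" using assms by auto
  ultimately show False using nat_dvd_not_less by blast
qed

lemma part1:
  fixes \<alpha> \<beta> :: real
  assumes a1: "1 < \<alpha>" and ab: "\<alpha> < \<beta>"
    and H: "\<forall>q\<in>R. (inverse \<beta> < of_rat q \<and> of_rat q < inverse \<alpha>) \<or> (\<alpha> < of_rat q \<and> of_rat q < \<beta>)"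
  shows "colorable R (nat \<lceil>ln (\<alpha> * \<beta>) / ln \<alpha>\<rceil>)"
proof -
  define k where "k = nat \<lceil>ln (\<alpha> * \<beta>) / ln \<alpha>\<rceil>"
  define f where "f n = nat \<lfloor>ln (real n) / ln \<alpha>\<rfloor> mod k" for n :: nat
  have la: "ln \<alpha> > 0" using a1 by simp
  have lb: "ln \<beta> > 0" using a1 ab by simp
  have lab: "ln (\<alpha> * \<beta>) / ln \<alpha> = 1 + ln \<beta> / ln \<alpha>"
    using a1 ab la by (simp add: ln_mult field_simps)
  have "0 < ln \<beta> / ln \<alpha>" using la lb by simp
  hence "0 < \<lceil>1 + ln \<beta> / ln \<alpha>\<rceil>" by simp
  hence kpos: "k > 0" unfolding k_def lab by simp
  have key: "f m \<noteq> f n" if m1: "m \<ge> 1" and n1: "n \<ge> 1"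
    and r1: "\<alpha> < real m / real n" and r2: "real m / real n < \<beta>" for m n :: nat
  proof -
    define x where "x = ln (real m) / ln \<alpha>"
    define y where "y = ln (real n) / ln \<alpha>"
    have mn: "ln (real m / real n) = ln (real m) - ln (real n)"
      using m1 n1 by (simp add: ln_div)
    have "ln \<alpha> < ln (real m / real n)" using r1 a1 by simp
    hence "ln \<alpha> < ln (real m) - ln (real n)" using mn by simp
    hence d1: "1 < x - y" using la unfolding x_def y_def by (simp add: field_simps)
    have "ln (real m / real n) < ln \<beta>" using r2 r1 a1 by simp
    hence "ln (real m) - ln (real n) < ln \<beta>" using mn by simp
    hence "(ln (real m) - ln (real n)) / ln \<alpha> < ln \<beta> / ln \<alpha>"
      using la by (simp add: divide_strict_right_mono)
    hence d2: "x - y < ln \<beta> / ln \<alpha>" unfolding x_def y_def by (simp add: diff_divide_distrib)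
    have y0: "0 \<le> y" using n1 la unfolding y_def by simp
    have F1: "1 \<le> \<lfloor>x\<rfloor> - \<lfloor>y\<rfloor>" using d1 by linarith
    have "real_of_int (\<lfloor>x\<rfloor> - \<lfloor>y\<rfloor>) < 1 + ln \<beta> / ln \<alpha>" using d2 by linarith
    also have "\<dots> \<le> real_of_int \<lceil>1 + ln \<beta> / ln \<alpha>\<rceil>" by (rule le_of_int_ceiling)
    finally have "\<lfloor>x\<rfloor> - \<lfloor>y\<rfloor> < \<lceil>1 + ln \<beta> / ln \<alpha>\<rceil>" by (simp only: of_int_less_iff)
    moreover have "\<lceil>1 + ln \<beta> / ln \<alpha>\<rceil> = int k" unfolding k_def lab
      using kpos k_def lab by linarith
    ultimately have F2: "\<lfloor>x\<rfloor> - \<lfloor>y\<rfloor> < int k" by simp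
    have "nat \<lfloor>x\<rfloor> mod k \<noteq> nat \<lfloor>y\<rfloor> mod k"
      by (rule mod_diff_ne) (use y0 F1 F2 in auto)
    thus ?thesis unfolding f_def x_def y_def by simp
  qed
  have fl: "f n < k" for n unfolding f_def using kpos by simp
  have ofr: "of_rat (of_nat m / of_nat n :: rat) = real m / real n" for m n
    by (simp add: of_rat_divide)
  have key2: "f m \<noteq> f n" if "m \<ge> 1" "n \<ge> 1" "of_nat m / of_nat n \<in> R" for m n :: nat
  proof -
    from H that(3) have "(inverse \<beta> < of_rat (of_nat m / of_nat n) \<and> of_rat (of_nat m / of_nat n) < inverse \<alpha>) \<or>
      (\<alpha> < of_rat (of_nat m / of_nat n) \<and> of_rat (of_nat m / of_nat n) < \<beta>)" by blast
    hence "(inverse \<beta> < real m / real n \<and> real m / real n < inverse \<alpha>) \<or>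
      (\<alpha> < real m / real n \<and> real m / real n < \<beta>)" unfolding ofr .
    thus ?thesis
    proof
      assume h: "inverse \<beta> < real m / real n \<and> real m / real n < inverse \<alpha>"
      have pos: "0 < real m / real n" using that by simp
      have inv: "inverse (real m / real n) = real n / real m" by (rule inverse_divide)
      have "inverse (inverse \<alpha>) < inverse (real m / real n)"
        using h pos by (intro less_imp_inverse_less) auto
      hence "\<alpha> < real n / real m" using inv by simp
      moreover have "inverse (real m / real n) < inverse (inverse \<beta>)"
        using h ab a1 by (intro less_imp_inverse_less) auto
      hence "real n / real m < \<beta>" using inv by simp
      ultimately have "f n \<noteq> f m" using that(1,2) by (intro key) auto
      thus ?thesis by simp
    next
      assume "\<alpha> < real m / real n \<and> real m / real n < \<beta>"
      thus ?thesis using that(1,2) by (intro key) auto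
    qed
  qed
  show ?thesis unfolding colorable_def k_def[symmetric]
  proof (intro exI[of _ f] conjI allI impI)
    fix m n assume "adjG R m n"
    hence A: "m \<ge> 1" "n \<ge> 1" "of_nat m / of_nat n \<in> R \<or> of_nat n / of_nat m \<in> R"
      unfolding adjG_def by blast+
    from A(3) show "f m \<noteq> f n"
    proof
      assume "of_nat m / of_nat n \<in> R" thus ?thesis using key2[of m n] A(1,2) by blast
    next
      assume "of_nat n / of_nat m \<in> R" thus ?thesis using key2[of n m] A(1,2) by metis
    qed
  next
    fix n :: nat show "f n < k" by (rule fl)
  qed
qed



lemma edge:
  assumes "(of_nat m / of_nat n :: rat) \<in> Rset a b c d" "m \<ge> 1" "n \<ge> 1"
  shows "\<exists>k::nat. int m * (int c * int k + d) = int n * (int a * int k + b)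
     \<and> int a * int k + b \<noteq> 0 \<and> int c * int k + d \<noteq> 0"
proof -
  from assms(1) obtain k :: nat where
    eq: "(of_nat m / of_nat n :: rat) = of_int (int a * int k + b) / of_int (int c * int k + d)"
    and pos: "(of_nat m / of_nat n :: rat) > 0"
    unfolding Rset_def by auto
  define X where "X = int a * int k + b"
  define Y where "Y = int c * int k + d"
  have eq': "(of_nat m / of_nat n :: rat) = of_int X / of_int Y" using eq unfolding X_def Y_def .
  have Y0: "Y \<noteq> 0"
  proof
    assume "Y = 0" thus False using eq' pos assms(2,3) by simp
  qed
  have X0: "X \<noteq> 0"
  proof
    assume "X = 0" thus False using eq' pos assms(2,3) by simp
  qed
  have n0: "(of_nat n :: rat) \<noteq> 0" using assms by simp
  have "(of_nat m :: rat) * of_int Y = of_nat n * of_int X"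
    using eq' n0 Y0 by (simp add: field_simps)
  hence "(of_int (int m * Y) :: rat) = of_int (int n * X)" by simp
  hence "int m * Y = int n * X" by (simp only: of_int_eq_iff)
  thus ?thesis using X0 Y0 unfolding X_def Y_def by blast
qed

lemma val_add:
  fixes P x y :: int
  assumes "prime P" "y \<noteq> 0" "P ^ Suc (multiplicity P y) dvd x"
  shows "multiplicity P (x + y) = multiplicity P y"
proof (rule multiplicity_eqI)
  let ?e = "multiplicity P y"
  have "P ^ ?e dvd P ^ Suc ?e" by (simp add: le_imp_power_dvd)
  hence "P ^ ?e dvd x" using assms(3) dvd_trans by blast
  thus "P ^ ?e dvd x + y" using multiplicity_dvd[of P y] by (rule dvd_add)
  show "\<not> P ^ Suc ?e dvd x + y"
  proof
    assume "P ^ Suc ?e dvd x + y"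
    hence "P ^ Suc ?e dvd y" using assms(3) by (metis add_diff_cancel_left' dvd_diff)
    hence "Suc ?e \<le> ?e" using assms by (intro multiplicity_geI) (auto dest: not_prime_unit)
    thus False by simp
  qed
qed

lemma vshift:
  fixes P a b :: int and k :: int
  assumes "prime P" "a \<noteq> 0" "b \<noteq> 0" "multiplicity P a > multiplicity P b"
  shows "multiplicity P (a * k + b) = multiplicity P b"
proof (rule val_add)
  have "P ^ Suc (multiplicity P b) dvd a" using assms(4) by (intro multiplicity_dvd') simp
  thus "P ^ Suc (multiplicity P b) dvd a * k" by simp
qed (use assms in auto)

lemma vp_facts:
  assumes "prime p" "a \<ge> 1" "vp p (int a) > max (vp p b) (vp p d)"
  shows "b \<noteq> 0" "d \<noteq> 0" "multiplicity (int p) (int a) > multiplicity (int p) b"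
        "multiplicity (int p) (int a) > multiplicity (int p) d"
proof -
  show b0: "b \<noteq> 0" using assms unfolding vp_def by (auto split: if_splits)
  show d0: "d \<noteq> 0" using assms unfolding vp_def by (auto split: if_splits)
  show "multiplicity (int p) (int a) > multiplicity (int p) b"
    using assms b0 d0 unfolding vp_def by (auto split: if_splits)
  show "multiplicity (int p) (int a) > multiplicity (int p) d"
    using assms b0 d0 unfolding vp_def by (auto split: if_splits)
qed

lemma edge_val:
  assumes "prime p" "a \<ge> 1" "vp p (int a) > max (vp p b) (vp p d)"
    "(of_nat m / of_nat n :: rat) \<in> Rset a b a d" "m \<ge> 1" "n \<ge> 1"
  shows "\<exists>k::int. int m * (int a * k + d) = int n * (int a * k + b)
     \<and> multiplicity (int p) (int a * k + b) = multiplicity (int p) b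
     \<and> multiplicity (int p) (int a * k + d) = multiplicity (int p) d
     \<and> multiplicity (int p) (int m) + multiplicity (int p) d
        = multiplicity (int p) (int n) + multiplicity (int p) b"
proof -
  note vf = vp_facts[OF assms(1-3)]
  have P: "prime (int p)" using assms(1) by simp
  obtain k :: nat where k: "int m * (int a * int k + d) = int n * (int a * int k + b)"
    "int a * int k + b \<noteq> 0" "int a * int k + d \<noteq> 0"
    using edge[OF assms(4-6)] by blast
  have a0: "int a \<noteq> 0" using assms by simp
  have vb: "multiplicity (int p) (int a * int k + b) = multiplicity (int p) b"
    by (rule vshift) (use P a0 vf in auto)
  have vd: "multiplicity (int p) (int a * int k + d) = multiplicity (int p) d"
    by (rule vshift) (use P a0 vf in auto)
  have "multiplicity (int p) (int m * (int a * int k + d)) = multiplicity (int p) (int n * (int a * int k + b))"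
    using k by simp
  moreover have "multiplicity (int p) (int m * (int a * int k + d)) = multiplicity (int p) (int m) + multiplicity (int p) (int a * int k + d)"
    using k assms(5,6) P by (intro prime_elem_multiplicity_mult_distrib) (auto simp: prime_imp_prime_elem)
  moreover have "multiplicity (int p) (int n * (int a * int k + b)) = multiplicity (int p) (int n) + multiplicity (int p) (int a * int k + b)"
    using k assms(5,6) P by (intro prime_elem_multiplicity_mult_distrib) (auto simp: prime_imp_prime_elem)
  ultimately have "multiplicity (int p) (int m) + multiplicity (int p) d
        = multiplicity (int p) (int n) + multiplicity (int p) b"
    using vb vd by simp
  thus ?thesis using k vb vd by (intro exI[of _ "int k"]) simp
qed



lemma chi_eq2:
  assumes "colorable R 2" "\<And>k. colorable R k \<Longrightarrow> 2 \<le> k"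
  shows "chi R = 2"
proof (rule antisym)
  have "chi R \<le> enat 2" by (rule chi_le[OF assms(1)])
  thus "chi R \<le> 2" by (simp add: numeral_eq_enat)
  show "2 \<le> chi R" unfolding chi_def
  proof (rule Inf_greatest)
    fix x assume "x \<in> {enat k |k. colorable R k}"
    then obtain k where "x = enat k" "colorable R k" by blast
    thus "2 \<le> x" using assms(2)[of k] by (simp add: numeral_eq_enat)
  qed
qed

lemma has_edge:
  assumes "a \<ge> 1" "b \<noteq> d"
  shows "\<exists>m n. adjG (Rset a b a d) m n"
proof -
  define K :: int where "K = 1 + \<bar>b\<bar> + \<bar>d\<bar>"
  define X where "X = int a * K + b"
  define Y where "Y = int a * K + d"
  have "K \<ge> 0" unfolding K_def by simp
  hence aK: "int a * K \<ge> K" using assms(1) mult_right_mono[of 1 "int a" K] by simp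
  have X0: "X > 0" using aK unfolding X_def K_def by linarith
  have Y0: "Y > 0" using aK unfolding Y_def K_def by linarith
  have XY: "X \<noteq> Y" using assms(2) unfolding X_def Y_def by simp
  have K1: "int (nat K) = K" unfolding K_def by simp
  have "nat K \<ge> 1" unfolding K_def by simp
  moreover have "(of_nat (nat X) / of_nat (nat Y) :: rat) =
     of_int (int a * int (nat K) + b) / of_int (int a * int (nat K) + d)"
    using X0 Y0 unfolding K1 X_def[symmetric] Y_def[symmetric] by simp
  ultimately have mem: "(of_nat (nat X) / of_nat (nat Y) :: rat) \<in>
     {of_int (int a * int n + b) / of_int (int a * int n + d) | n. n \<ge> 1}" by blast
  have pos: "(of_nat (nat X) / of_nat (nat Y) :: rat) > 0" using X0 Y0 by simp
  have ne1: "(of_nat (nat X) / of_nat (nat Y) :: rat) \<noteq> 1" using X0 Y0 XY by simp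
  have x1: "nat X \<ge> 1" "nat Y \<ge> 1" using X0 Y0 by auto
  have "adjG (Rset a b a d) (nat X) (nat Y)"
    unfolding adjG_def Rset_def using x1 mem pos ne1 by blast
  thus ?thesis by blast
qed

lemma lower2:
  assumes "a \<ge> 1" "b \<noteq> d" "colorable (Rset a b a d) k"
  shows "2 \<le> k"
proof -
  obtain m n where e: "adjG (Rset a b a d) m n" using has_edge[OF assms(1,2)] by blast
  hence mn: "m \<ge> 1" "n \<ge> 1" unfolding adjG_def by auto
  obtain g :: "nat \<Rightarrow> nat" where g: "\<forall>n\<ge>1. g n < k" "\<forall>m n. adjG (Rset a b a d) m n \<longrightarrow> g m \<noteq> g n"
    using assms(3) unfolding colorable_def by blast
  have "g m < k" "g n < k" "g m \<noteq> g n" using g e mn by auto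
  thus ?thesis by linarith
qed

lemma part3:
  assumes p: "prime p" and a1: "a \<ge> 1" and H: "vp p (int a) > max (vp p b) (vp p d)"
    and ne: "vp p b \<noteq> vp p d"
  shows "chi (Rset a b a d) = 2"
proof -
  note vf = vp_facts[OF p a1 H]
  define eb where "eb = multiplicity (int p) b"
  define ed where "ed = multiplicity (int p) d"
  have ebd: "eb \<noteq> ed" using ne vf unfolding vp_def eb_def ed_def by auto
  have bd: "b \<noteq> d" using ne by auto
  define \<delta> where "\<delta> = (if eb > ed then eb - ed else ed - eb)"
  have dpos: "\<delta> > 0" using ebd unfolding \<delta>_def by auto
  define f where "f n = (multiplicity (int p) (int n) div \<delta>) mod 2" for n :: nat
  have par: "(x div \<delta>) mod 2 \<noteq> (y div \<delta>) mod 2" if "x + ed = y + eb" for x y :: nat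
  proof (cases "eb > ed")
    case True
    hence "x = y + \<delta>" using that unfolding \<delta>_def by auto
    hence h: "x div \<delta> = y div \<delta> + 1" using dpos by simp
    have "\<forall>t::nat. (t+1) mod 2 \<noteq> t mod 2" by presburger
    thus ?thesis unfolding h by blast
  next
    case False
    hence "y = x + \<delta>" using that ebd unfolding \<delta>_def by auto
    hence h: "y div \<delta> = x div \<delta> + 1" using dpos by simp
    have "\<forall>t::nat. (t+1) mod 2 \<noteq> t mod 2" by presburger
    thus ?thesis unfolding h by metis
  qed
  have key: "f m \<noteq> f n" if hh: "m \<ge> 1" "n \<ge> 1" "(of_nat m / of_nat n :: rat) \<in> Rset a b a d" for m n
  proof -
    obtain k where "multiplicity (int p) (int m) + ed = multiplicity (int p) (int n) + eb"
      using edge_val[OF p a1 H hh(3,1,2)] unfolding eb_def ed_def by blast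
    thus ?thesis unfolding f_def by (rule par)
  qed
  have c2: "colorable (Rset a b a d) 2" unfolding colorable_def
  proof (intro exI[of _ f] conjI allI impI)
    fix m n assume "adjG (Rset a b a d) m n"
    hence A: "m \<ge> 1" "n \<ge> 1" "of_nat m / of_nat n \<in> Rset a b a d \<or> of_nat n / of_nat m \<in> Rset a b a d"
      unfolding adjG_def by blast+
    from A(3) show "f m \<noteq> f n"
    proof
      assume "of_nat m / of_nat n \<in> Rset a b a d" thus ?thesis using key[of m n] A(1,2) by blast
    next
      assume "of_nat n / of_nat m \<in> Rset a b a d"
      hence "f n \<noteq> f m" using key[of n m] A(1,2) by blast
      thus ?thesis by simp
    qed
  next
    fix n :: nat show "f n < 2" unfolding f_def by simp
  qed
  show ?thesis by (rule chi_eq2[OF c2 lower2[OF a1 bd]])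
qed



lemma divmod_uniq:
  fixes D q t :: int
  assumes "0 \<le> t" "t < D"
  shows "(q * D + t) div D = q" "(q * D + t) mod D = t"
  using assms by (simp_all add: add.commute)

lemma divP_bound:
  fixes r P :: int and f :: nat
  assumes "0 \<le> r" "r < P ^ Suc f" "P > 0"
  shows "r div P < P ^ f"
proof -
  have "r mod P \<ge> 0" using assms(3) by simp
  hence "P * (r div P) \<le> r" using mult_div_mod_eq[of P r] by linarith
  also have "r < P * P ^ f" using assms(2) by simp
  finally show ?thesis using assms(3) mult_less_cancel_left_pos by blast
qed

lemma part2:
  assumes p: "prime p" and a1: "a \<ge> 1" and H: "vp p (int a) > max (vp p b) (vp p d)"
    and eq: "vp p b = vp p d" and bd: "b \<noteq> d"
  shows "colorable (Rset a b a d) (p ^ multiplicity (int p) (b - d) * (p - 1))"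
proof -
  note vf = vp_facts[OF p a1 H]
  define P where "P = int p"
  have PP: "prime P" unfolding P_def using p by simp
  have P2: "P \<ge> 2" unfolding P_def using p prime_ge_2_nat by fastforce
  have Pnu: "\<not> is_unit P" using PP not_prime_unit by blast
  define e where "e = multiplicity P b"
  have ed: "multiplicity P d = e" using eq vf unfolding vp_def e_def P_def by auto
  define g where "g = multiplicity P (b - d)"
  have bd0: "b - d \<noteq> 0" using bd by simp
  have "P ^ e dvd b" unfolding e_def by (rule multiplicity_dvd)
  moreover have "P ^ e dvd d" unfolding ed[symmetric] by (rule multiplicity_dvd)
  ultimately have "P ^ e dvd b - d" by (rule dvd_diff)
  hence ge: "e \<le> g" unfolding g_def using bd0 Pnu by (intro multiplicity_geI) auto
  define f0 where "f0 = g - e"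
  define Q where "Q = P ^ Suc f0"
  have Qpos: "Q > 0" unfolding Q_def using P2 by simp
  have PQ: "P dvd Q" unfolding Q_def by simp
  define r where "r M = (M div P ^ multiplicity P M) mod Q" for M :: int
  define val where "val M = (r M div P) * (P - 1) + (r M mod P - 1)" for M :: int
  define col where "col n = nat (val (int n))" for n :: nat
  have rfacts: "0 \<le> r M \<and> r M < Q \<and> 1 \<le> r M mod P" if M0: "M \<noteq> 0" for M
  proof -
    have nd: "\<not> P dvd (M div P ^ multiplicity P M)" using M0 Pnu by (rule multiplicity_decompose)
    have "r M mod P = (M div P ^ multiplicity P M) mod P" unfolding r_def using PQ by (simp add: mod_mod_cancel)
    moreover have "(M div P ^ multiplicity P M) mod P \<noteq> 0" using nd by (simp add: dvd_eq_mod_eq_0)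
    moreover have "(M div P ^ multiplicity P M) mod P \<ge> 0" using P2 by simp
    ultimately show ?thesis unfolding r_def using Qpos by simp
  qed
  have valfacts: "0 \<le> val M \<and> val M < P ^ f0 * (P - 1)" if M0: "M \<noteq> 0" for M
  proof -
    have R: "0 \<le> r M" "r M < Q" "1 \<le> r M mod P" using rfacts[OF M0] by auto
    have q0: "0 \<le> r M div P" using R(1) P2 pos_imp_zdiv_nonneg_iff[of P "r M"] by simp
    have q1: "r M div P \<le> P ^ f0 - 1" using divP_bound[of "r M" P f0] R P2 unfolding Q_def by simp
    have t1: "r M mod P \<le> P - 1" using pos_mod_bound[of P "r M"] P2 by linarith
    have "(r M div P) * (P - 1) \<le> (P ^ f0 - 1) * (P - 1)" using q1 P2 by (intro mult_right_mono) auto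
    hence "val M \<le> (P ^ f0 - 1) * (P - 1) + (P - 2)" unfolding val_def using t1 by linarith
    also have "\<dots> = P ^ f0 * (P - 1) - 1" by (simp add: algebra_simps)
    finally have "val M < P ^ f0 * (P - 1)" by simp
    moreover have "0 \<le> val M" unfolding val_def using q0 R P2 by simp
    ultimately show ?thesis by simp
  qed
  have valinj: "r M = r N" if "M \<noteq> 0" "N \<noteq> 0" "val M = val N" for M N
  proof -
    have RM: "0 \<le> r M mod P - 1" "r M mod P - 1 < P - 1" using rfacts[OF that(1)] P2 by auto
    have RN: "0 \<le> r N mod P - 1" "r N mod P - 1 < P - 1" using rfacts[OF that(2)] P2 by auto
    have "r M div P = r N div P"
      using divmod_uniq(1)[OF RM, of "r M div P"] divmod_uniq(1)[OF RN, of "r N div P"] that(3)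
      unfolding val_def by simp
    moreover have "r M mod P = r N mod P"
      using divmod_uniq(2)[OF RM, of "r M div P"] divmod_uniq(2)[OF RN, of "r N div P"] that(3)
      unfolding val_def by simp
    ultimately show ?thesis by (metis div_mult_mod_eq)
  qed
  have redge: "r (int m) \<noteq> r (int n)" if hh: "m \<ge> 1" "n \<ge> 1" "(of_nat m / of_nat n :: rat) \<in> Rset a b a d" for m n
  proof
    assume req: "r (int m) = r (int n)"
    obtain k where k: "int m * (int a * k + d) = int n * (int a * k + b)"
       "multiplicity (int p) (int a * k + b) = multiplicity (int p) b"
       "multiplicity (int p) (int m) + multiplicity (int p) d
        = multiplicity (int p) (int n) + multiplicity (int p) b"
      using edge_val[OF p a1 H hh(3,1,2)] by blast
    define M where "M = int m"
    define N where "N = int n"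
    define X where "X = int a * k + b"
    have M0: "M \<noteq> 0" and N0: "N \<noteq> 0" using hh unfolding M_def N_def by auto
    define s where "s = multiplicity P M"
    have sN: "multiplicity P N = s" using k(3) ed unfolding s_def M_def N_def P_def e_def by simp
    have vX: "multiplicity P X = e" using k(2) unfolding X_def e_def P_def by simp
    have X0: "X \<noteq> 0" using vX ed vf X_def k(1) M0 N0
      by (metis M_def N_def mult_eq_0_iff add_diff_cancel_left' bd0 diff_diff_eq2 right_diff_distrib)
    have key: "M * (b - d) = (M - N) * X"
      using k(1) unfolding M_def N_def X_def by (simp add: algebra_simps)
    have "(M div P ^ s) mod Q = (N div P ^ s) mod Q" using req sN unfolding r_def s_def M_def N_def by simp
    hence "Q dvd (M div P ^ s) - (N div P ^ s)" by (simp add: mod_eq_dvd_iff)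
    hence dv: "P ^ s * Q dvd P ^ s * (M div P ^ s) - P ^ s * (N div P ^ s)"
      by (metis mult_dvd_mono dvd_refl right_diff_distrib)
    have "P ^ s * (M div P ^ s) = M" unfolding s_def by (simp add: multiplicity_dvd dvd_mult_div_cancel)
    moreover have "P ^ s * (N div P ^ s) = N" using sN[symmetric] by (simp add: multiplicity_dvd dvd_mult_div_cancel)
    ultimately have "P ^ (s + Suc f0) dvd M - N" using dv unfolding Q_def by (simp add: power_add mult_ac)
    moreover have MN0: "M - N \<noteq> 0" using key M0 bd0 by auto
    ultimately have "s + Suc f0 \<le> multiplicity P (M - N)" using Pnu by (intro multiplicity_geI) auto
    moreover have "multiplicity P (M * (b - d)) = s + g"
      unfolding s_def g_def using PP M0 bd0 by (intro prime_elem_multiplicity_mult_distrib) (auto simp: prime_imp_prime_elem)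
    moreover have "multiplicity P ((M - N) * X) = multiplicity P (M - N) + e"
      using PP P2 MN0 X0 vX prime_elem_multiplicity_mult_distrib[of P "M - N" X] by (simp add: prime_imp_prime_elem)
    ultimately show False using key ge unfolding f0_def by simp
  qed
  have colne: "col m \<noteq> col n" if hh: "m \<ge> 1" "n \<ge> 1" "(of_nat m / of_nat n :: rat) \<in> Rset a b a d" for m n
  proof
    assume "col m = col n"
    hence "val (int m) = val (int n)" unfolding col_def using valfacts[of "int m"] valfacts[of "int n"] hh(1,2)
      by (simp add: nat_eq_iff2)
    hence "r (int m) = r (int n)" using valinj hh(1,2) by simp
    thus False using redge[OF hh] by simp
  qed
  have bound: "P ^ f0 * (P - 1) \<le> int (p ^ g * (p - 1))"
  proof -
    have "P ^ f0 \<le> P ^ g" using P2 unfolding f0_def by (intro power_increasing) auto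
    hence "P ^ f0 * (P - 1) \<le> P ^ g * (P - 1)" using P2 by (intro mult_right_mono) auto
    also have "\<dots> = int (p ^ g * (p - 1))" unfolding P_def using p prime_ge_2_nat[OF p]
      by (simp add: of_nat_diff)
    finally show ?thesis .
  qed
  show ?thesis unfolding colorable_def g_def[symmetric] P_def[symmetric]
  proof (intro exI[of _ col] conjI allI impI)
    fix m n assume "adjG (Rset a b a d) m n"
    hence A: "m \<ge> 1" "n \<ge> 1" "of_nat m / of_nat n \<in> Rset a b a d \<or> of_nat n / of_nat m \<in> Rset a b a d"
      unfolding adjG_def by blast+
    from A(3) show "col m \<noteq> col n"
    proof
      assume "of_nat m / of_nat n \<in> Rset a b a d" thus ?thesis using colne[of m n] A(1,2) by blast
    next
      assume "of_nat n / of_nat m \<in> Rset a b a d"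
      hence "col n \<noteq> col m" using colne[of n m] A(1,2) by blast
      thus ?thesis by simp
    qed
  next
    fix n :: nat assume "1 \<le> n"
    hence vv: "0 \<le> val (int n) \<and> val (int n) < P ^ f0 * (P - 1)" using valfacts[of "int n"] by simp
    hence "val (int n) < int (p ^ g * (p - 1))" using bound by linarith
    hence "nat (val (int n)) < nat (int (p ^ g * (p - 1)))" using vv nat_less_eq_zless by blast
    thus "col n < p ^ g * (p - 1)" by (simp only: col_def nat_int)
  qed
qed


theorem theorem2p1:
  fixes a c :: nat and b d :: int
  assumes "a \<ge> 1" and "c \<ge> 1"
  shows
   "(a \<noteq> c \<longrightarrow> (\<forall>\<alpha> \<beta> :: real. 1 < \<alpha> \<and> \<alpha> < \<beta> \<and>
        (\<forall>q \<in> Rset a b c d. (inverse \<beta> < of_rat q \<and> of_rat q < inverse \<alpha>) \<or>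
                             (\<alpha> < of_rat q \<and> of_rat q < \<beta>))
        \<longrightarrow> chi (Rset a b c d) \<le> enat (nat \<lceil>ln (\<alpha> * \<beta>) / ln \<alpha>\<rceil>)))
  \<and> (a = c \<longrightarrow> (\<forall>p. prime p \<and> vp p (int a) > max (vp p b) (vp p d) \<and> vp p b = vp p d
        \<longrightarrow> chi (Rset a b c d) \<le>
              (if b = d then \<infinity> else enat (p ^ multiplicity (int p) (b - d) * (p - 1)))))
  \<and> (a = c \<longrightarrow> (\<forall>p. prime p \<and> vp p (int a) > max (vp p b) (vp p d) \<and> vp p b \<noteq> vp p d
        \<longrightarrow> chi (Rset a b c d) = 2))"
proof (intro conjI impI allI)
  fix \<alpha> \<beta> :: real
  assume h: "1 < \<alpha> \<and> \<alpha> < \<beta> \<and>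
        (\<forall>q \<in> Rset a b c d. (inverse \<beta> < of_rat q \<and> of_rat q < inverse \<alpha>) \<or>
                             (\<alpha> < of_rat q \<and> of_rat q < \<beta>))"
  show "chi (Rset a b c d) \<le> enat (nat \<lceil>ln (\<alpha> * \<beta>) / ln \<alpha>\<rceil>)"
    by (rule chi_le, rule part1) (use h in auto)
next
  fix p :: nat
  assume ac: "a = c" and h: "prime p \<and> vp p (int a) > max (vp p b) (vp p d) \<and> vp p b = vp p d"
  show "chi (Rset a b c d) \<le>
              (if b = d then \<infinity> else enat (p ^ multiplicity (int p) (b - d) * (p - 1)))"
  proof (cases "b = d")
    case True thus ?thesis by simp
  next
    case False
    have "chi (Rset a b a d) \<le> enat (p ^ multiplicity (int p) (b - d) * (p - 1))"
      by (rule chi_le, rule part2) (use h assms False in auto)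
    thus ?thesis using False ac by simp
  qed
next
  fix p :: nat
  assume ac: "a = c" and h: "prime p \<and> vp p (int a) > max (vp p b) (vp p d) \<and> vp p b \<noteq> vp p d"
  have "chi (Rset a b a d) = 2" by (rule part3) (use h assms in auto)
  thus "chi (Rset a b c d) = 2" using ac by simp
qed

end
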